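(* For a prime $N\ge3$, \[ \frac1{N-1}\sum_{w=1}^{N-1}\frac1N\sum_{h=1}^{N-1}\frac{|\cot(\pi hw/N)|}{h}\le\frac{H_{N-1}(1)}{N}\,\frac6\pi\log(N). \]
   Context: $H_n(1)=\sum_{h=1}^n h^{-1}$ is the $n$-th harmonic number; $\log$ is the natural logarithm. *)

theory Defs
  imports "HOL-Analysis.Analysis" "HOL-Computational_Algebra.Primes"
begin

end

theory Submission
  imports Defs "HOL-Number_Theory.Cong"
begin

lemma xcos_le_sin:
  fixes x :: real
  assumes "0 \<le> x" "x \<le> pi"
  shows "x * cos x \<le> sin x"
proof -
  let ?f = "\<lambda>x. sin x - x * cos x"
  have "\<And>u. \<lbrakk>0 \<le> u; u \<le> x\<rbrakk> \<Longrightarrow> \<exists>y. (?f has_real_derivative y) (at u) \<and> y \<ge> 0"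
  proof -
    fix u :: real assume u: "0 \<le> u" "u \<le> x"
    have "(?f has_real_derivative u * sin u) (at u)"
      by (auto intro!: derivative_eq_intros simp: field_simps)
    moreover have "u * sin u \<ge> 0" using u assms by (simp add: sin_ge_zero)
    ultimately show "\<exists>y. (?f has_real_derivative y) (at u) \<and> y \<ge> 0" by blast
  qed
  then have "?f 0 \<le> ?f x" by (rule DERIV_nonneg_imp_nondecreasing[OF assms(1)])
  then show ?thesis by simp
qed

lemma cot_le_inv:
  fixes x :: real
  assumes "0 < x" "x < pi"
  shows "cot x \<le> 1 / x"
proof -
  have s: "sin x > 0" using assms by (simp add: sin_gt_zero)
  have "x * cos x \<le> sin x" using xcos_le_sin assms by simp
  then show ?thesis using s assms by (simp add: cot_def field_simps)
qed

lemma abs_cot_bound: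
  fixes x :: real
  assumes "0 < x" "x < pi"
  shows "\<bar>cot x\<bar> \<le> 1 / x + 1 / (pi - x)"
proof -
  have a: "cot x \<le> 1 / x" using cot_le_inv assms by simp
  have "cot (pi - x) \<le> 1 / (pi - x)" using cot_le_inv[of "pi - x"] assms by simp
  moreover have "cot (pi - x) = - cot x" by (simp add: cot_def)
  ultimately have b: "- cot x \<le> 1 / (pi - x)" by simp
  have "1 / x > 0" "1 / (pi - x) > 0" using assms by auto
  then show ?thesis using a b by linarith
qed

lemma cot_shift: "cot (x + real q * pi) = cot x"
proof -
  have "cot (x + real q * pi) = (cos x * (-1)^q) / (sin x * (-1)^q)"
    by (simp add: cot_def sin_add cos_add)
  also have "\<dots> = cot x" by (simp add: cot_def)
  finally show ?thesis .
qed

lemma cot_mod: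
  fixes N m :: nat
  assumes "N > 0"
  shows "cot (pi * real m / real N) = cot (pi * real (m mod N) / real N)"
proof -
  have "m = m mod N + N * (m div N)" by simp
  then have "real m = real (m mod N) + real N * real (m div N)"
    by (metis of_nat_add of_nat_mult)
  then have "pi * real m / real N = pi * real (m mod N) / real N + real (m div N) * pi"
    using assms by (simp add: field_simps)
  then show ?thesis by (simp add: cot_shift)
qed

lemma perm_sum:
  fixes N h :: nat and g :: "nat \<Rightarrow> real"
  assumes p: "prime N" and h: "h \<in> {1..N-1}"
  shows "(\<Sum>w=1..N-1. g (h * w mod N)) = (\<Sum>k=1..N-1. g k)"
proof -
  let ?f = "\<lambda>w. h * w mod N"
  have N0: "N > 1" using p prime_gt_1_nat by blast
  have cop: "coprime h N"
  proof -
    have "\<not> N dvd h" using h N0 by (auto dest: dvd_imp_le)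
    then show ?thesis using p prime_imp_coprime coprime_commute by blast
  qed
  have inj: "inj_on ?f {1..N-1}"
  proof (rule inj_onI)
    fix a b assume a: "a \<in> {1..N-1}" and b: "b \<in> {1..N-1}" and e: "?f a = ?f b"
    have "[h * a = h * b] (mod N)" using e by (simp add: cong_def)
    then have "[a = b] (mod N)" using cong_mult_lcancel_nat[OF cop] by simp
    moreover have "a < N" "b < N" using a b N0 by auto
    ultimately show "a = b" by (simp add: cong_def)
  qed
  have sub: "?f ` {1..N-1} \<subseteq> {1..N-1}"
  proof
    fix y assume "y \<in> ?f ` {1..N-1}"
    then obtain w where w: "w \<in> {1..N-1}" "y = h * w mod N" by blast
    have "\<not> N dvd h" using h N0 by (auto dest: dvd_imp_le)
    moreover have "\<not> N dvd w" using w N0 by (auto dest: dvd_imp_le)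
    ultimately have "\<not> N dvd h * w" using p prime_dvd_mult_iff by blast
    then have "y \<noteq> 0" using w by (auto simp: dvd_eq_mod_eq_0)
    moreover have "y < N" using w N0 by simp
    ultimately show "y \<in> {1..N-1}" by auto
  qed
  have "card (?f ` {1..N-1}) = card {1..N-1}" using inj by (simp add: card_image)
  then have img: "?f ` {1..N-1} = {1..N-1}" using sub by (simp add: card_subset_eq)
  have "(\<Sum>k=1..N-1. g k) = (\<Sum>k\<in>?f ` {1..N-1}. g k)" using img by simp
  also have "\<dots> = (\<Sum>w=1..N-1. g (h * w mod N))" using inj by (simp add: sum.reindex)
  finally show ?thesis by simp
qed

lemma harm_le_ln: "n \<ge> 1 \<Longrightarrow> harm n \<le> ln (real n) + (1::real)"
proof -
  assume n: "n \<ge> 1"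
  then obtain m where m: "n = Suc m" by (cases n) auto
  have "harm (Suc m) - ln (real (Suc m)) \<le> harm (Suc 0) - ln (real (Suc 0))"
    using decseq_harm_diff_ln unfolding decseq_def by (metis le0)
  moreover have "harm 0 = (0::real)" by (simp add: harm_def)
  ultimately show ?thesis using m by (simp add: harm_Suc)
qed

theorem lemma4:
  fixes N :: nat
  assumes "prime N" and "N \<ge> 3"
  shows "(1 / (real N - 1)) * (\<Sum>w=1..N-1. (1 / real N) *
            (\<Sum>h=1..N-1. \<bar>cot (pi * real h * real w / real N)\<bar> / real h))
         \<le> (harm (N - 1) / real N) * (6 / pi) * ln (real N)"
proof -
  define C where "C = (\<Sum>k=1..N-1. \<bar>cot (pi * real k / real N)\<bar>)"
  define H :: real where "H = harm (N - 1)"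
  have N0: "N > 0" using assms by simp
  have inner: "(\<Sum>w=1..N-1. \<bar>cot (pi * real h * real w / real N)\<bar>) = C"
    if h: "h \<in> {1..N-1}" for h
  proof -
    have "(\<Sum>w=1..N-1. \<bar>cot (pi * real h * real w / real N)\<bar>)
        = (\<Sum>w=1..N-1. \<bar>cot (pi * real (h * w mod N) / real N)\<bar>)"
      by (rule sum.cong[OF refl]) (metis cot_mod[OF N0] of_nat_mult mult.assoc)
    also have "\<dots> = C" unfolding C_def
      by (rule perm_sum[OF assms(1) h, where g = "\<lambda>k. \<bar>cot (pi * real k / real N)\<bar>"])
    finally show ?thesis .
  qed
  have "(\<Sum>w=1..N-1. (1 / real N) *
            (\<Sum>h=1..N-1. \<bar>cot (pi * real h * real w / real N)\<bar> / real h))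
      = (1 / real N) * (\<Sum>h=1..N-1. (\<Sum>w=1..N-1. \<bar>cot (pi * real h * real w / real N)\<bar>) / real h)"
  proof -
    have "(\<Sum>w=1..N-1. (1 / real N) *
            (\<Sum>h=1..N-1. \<bar>cot (pi * real h * real w / real N)\<bar> / real h))
       = (1 / real N) * (\<Sum>w=1..N-1. \<Sum>h=1..N-1. \<bar>cot (pi * real h * real w / real N)\<bar> / real h)"
      by (simp add: sum_distrib_left)
    also have "(\<Sum>w=1..N-1. \<Sum>h=1..N-1. \<bar>cot (pi * real h * real w / real N)\<bar> / real h)
       = (\<Sum>h=1..N-1. \<Sum>w=1..N-1. \<bar>cot (pi * real h * real w / real N)\<bar> / real h)"
      by (rule sum.swap)
    also have "\<dots> = (\<Sum>h=1..N-1. (\<Sum>w=1..N-1. \<bar>cot (pi * real h * real w / real N)\<bar>) / real h)"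
      by (simp add: sum_divide_distrib)
    finally show ?thesis .
  qed
  also have "\<dots> = (1 / real N) * (\<Sum>h=1..N-1. C / real h)"
    using inner by simp
  also have "\<dots> = (1 / real N) * C * H"
    by (simp add: H_def harm_def sum_distrib_left divide_inverse mult.assoc)
  finally have LHS: "(1 / (real N - 1)) * (\<Sum>w=1..N-1. (1 / real N) *
            (\<Sum>h=1..N-1. \<bar>cot (pi * real h * real w / real N)\<bar> / real h))
       = C * H / (real N * (real N - 1))" by simp
  have Cs: "C \<le> (\<Sum>k=1..N-1. real N / pi * (1 / real k) + real N / pi * (1 / real (N - k)))"
    unfolding C_def
  proof (rule sum_mono)
    fix k assume k: "k \<in> {1..N-1}"
    have x0: "0 < pi * real k / real N" using k N0 by auto
    have kN: "k < N" using k N0 by auto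
    have x1: "pi * real k / real N < pi" using kN N0 by (simp add: field_simps)
    have "\<bar>cot (pi * real k / real N)\<bar> \<le> 1 / (pi * real k / real N) + 1 / (pi - pi * real k / real N)"
      using abs_cot_bound[OF x0 x1] .
    also have "1 / (pi * real k / real N) = real N / pi * (1 / real k)" by simp
    also have "pi - pi * real k / real N = pi * real (N - k) / real N"
      using kN N0 by (simp add: field_simps of_nat_diff)
    also have "1 / (pi * real (N - k) / real N) = real N / pi * (1 / real (N - k))" by simp
    finally show "\<bar>cot (pi * real k / real N)\<bar> \<le> real N / pi * (1 / real k) + real N / pi * (1 / real (N - k))" .
  qed
  have S1: "(\<Sum>k=1..N-1. real N / pi * (1 / real k) + real N / pi * (1 / real (N - k)))
      = real N / pi * ((\<Sum>k=1..N-1. 1 / real k) + (\<Sum>k=1..N-1. 1 / real (N - k)))"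
    by (simp add: sum.distrib sum_distrib_left distrib_left)
  have S2: "(\<Sum>k=1..N-1. 1 / real (N - k)) = (\<Sum>k=1..N-1. 1 / real k)"
  proof -
    have "(\<Sum>k=1..N-1. 1 / real k) = (\<Sum>k=1..N-1. 1 / real (N - 1 + 1 - k))"
      by (rule sum.atLeastAtMost_rev)
    also have "\<dots> = (\<Sum>k=1..N-1. 1 / real (N - k))" using N0 by simp
    finally show ?thesis by simp
  qed
  have S3: "(\<Sum>k=1..N-1. 1 / real k) = H" by (simp add: H_def harm_def divide_inverse)
  have S4: "real N / pi * (H + H) = real N * (2 * H) / pi" by simp
  have Cb: "C \<le> real N * (2 * H) / pi"
    using Cs unfolding S1 S2 S3 S4 .
  have ln3: "ln (real N) \<ge> 1"
  proof -
    have "exp 1 \<le> real N" using exp_le assms(2) by linarith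
    then have "ln (exp 1) \<le> ln (real N)" using N0 by (subst ln_le_cancel_iff) auto
    then show ?thesis by simp
  qed
  have Hb: "H \<le> ln (real N) + 1"
  proof -
    have "H \<le> ln (real (N - 1)) + 1" unfolding H_def by (rule harm_le_ln) (use assms(2) in simp)
    also have "ln (real (N - 1)) \<le> ln (real N)" using assms(2) by (subst ln_le_cancel_iff) auto
    finally show ?thesis by simp
  qed
  have H0: "H \<ge> 0" unfolding H_def by (rule harm_nonneg)
  have C0: "C \<ge> 0" unfolding C_def by (simp add: sum_nonneg)
  have key: "C \<le> (real N - 1) * (6 / pi) * ln (real N)"
  proof -
    have "C \<le> real N * (2 * H) / pi" by (rule Cb)
    also have "\<dots> \<le> real N * (2 * (2 * ln (real N))) / pi"
    proof -
      have "2 * H \<le> 2 * (2 * ln (real N))" using Hb ln3 by linarith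
      then have "real N * (2 * H) \<le> real N * (2 * (2 * ln (real N)))"
        by (rule mult_left_mono) simp
      then show ?thesis by (rule divide_right_mono) simp
    qed
    also have "\<dots> \<le> (real N - 1) * (6 / pi) * ln (real N)"
    proof -
      have "4 * real N \<le> 6 * (real N - 1)" using assms(2) by simp
      then have "4 * real N * ln (real N) \<le> 6 * (real N - 1) * ln (real N)"
        using ln3 by (intro mult_right_mono) auto
      then have i: "4 * real N * ln (real N) / pi \<le> 6 * (real N - 1) * ln (real N) / pi"
        by (rule divide_right_mono) simp
      have e1: "real N * (2 * (2 * ln (real N))) / pi = 4 * real N * ln (real N) / pi" by simp
      have e2: "(real N - 1) * (6 / pi) * ln (real N) = 6 * (real N - 1) * ln (real N) / pi" by simp
      show ?thesis unfolding e1 e2 by (rule i)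
    qed
    finally show ?thesis .
  qed
  have "C * H / (real N * (real N - 1)) \<le> ((real N - 1) * (6 / pi) * ln (real N)) * H / (real N * (real N - 1))"
    using key H0 assms(2) by (intro divide_right_mono mult_right_mono) auto
  also have "\<dots> = (H / real N) * (6 / pi) * ln (real N)"
    using assms(2) by (simp add: field_simps)
  finally show ?thesis using LHS H_def by simp
qed

end
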